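(* Let $n\ge1$ and let $H:[0,\infty)^n\to[0,\infty)$ be continuous, non-decreasing and bounded from above by the minimum, i.e. $H(x_1,\dots,x_n)\le\min(x_1,\dots,x_n)$. Let $\omega_j,\xi_j\in(0,\infty)$, $j=0,1,\dots,n$, be such that $x^{1/(\xi_0\omega_0)}\le x\le x^{1/(\xi_i\omega_i)}$ and $x\ge x^{\omega_i/\omega_0}$ for all $x\in[0,\infty)$ and $i=1,\dots,n$. Then for every measurable space $(X,\mathcal{A})$, every comonotone system $f_1,\dots,f_n\in\mathcal{F}^{(X,\mathcal{A})}$ and every monotone measure $m\in\mathcal{M}^{(X,\mathcal{A})}$ with $\mathbf{Su}(m,f_i^{\xi_i})<\infty$ for $i=1,\dots,n$, \[ \big[\mathbf{Su}\big(m,(H(f_1,\dots,f_n))^{\xi_0}\big)\big]^{\omega_0}\ \ge\ H\Big[\big(\mathbf{Su}(m,f_1^{\xi_1})\big)^{\omega_1},\dots,\big(\mathbf{Su}(m,f_n^{\xi_n})\big)^{\omega_n}\Big]. \]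
   Context: A monotone measure on $(X,\mathcal{A})$ is $m:\mathcal{A}\to[0,\infty]$ with $m(\emptyset)=0$, $m(X)>0$, $m(A)\le m(B)$ for $A\subseteq B$; $\mathcal{M}^{(X,\mathcal{A})}$ is the set of these; $\mathcal{F}^{(X,\mathcal{A})}$ the set of $\mathcal{A}$-measurable $f:X\to[0,\infty]$. The Sugeno integral is $\mathbf{Su}(m,f)=\sup\{\min(t,m(\{f\ge t\})) : t\in(0,\infty]\}$. A comonotone system is a family of pairwise comonotone functions: $(f_i(x)-f_i(y))(f_j(x)-f_j(y))\ge0$ for all $x,y\in X$. *)

theory Defs
  imports "HOL-Analysis.Analysis"
begin

text \<open>Monotone measure on the measurable space (space M, sets M).
  Only the sigma-algebra of M is used; its own emeasure is ignored.\<close>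
definition monotone_measure :: "'a measure \<Rightarrow> ('a set \<Rightarrow> ennreal) \<Rightarrow> bool" where
  "monotone_measure M m \<longleftrightarrow>
     m {} = 0 \<and> m (space M) > 0 \<and>
     (\<forall>A\<in>sets M. \<forall>B\<in>sets M. A \<subseteq> B \<longrightarrow> m A \<le> m B)"

definition sugeno :: "'a measure \<Rightarrow> ('a set \<Rightarrow> ennreal) \<Rightarrow> ('a \<Rightarrow> ennreal) \<Rightarrow> ennreal" where
  "sugeno M m f = (SUP t\<in>{0<..}. min t (m {x\<in>space M. t \<le> f x}))"

text \<open>Comonotonicity of two [0,\<infinity>]-valued functions: (f x - f y)(g x - g y) \<ge> 0,
  i.e. f and g are never strictly oppositely ordered.\<close>
definition comonotone :: "'a set \<Rightarrow> ('a \<Rightarrow> ennreal) \<Rightarrow> ('a \<Rightarrow> ennreal) \<Rightarrow> bool" where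
  "comonotone X f g \<longleftrightarrow>
     (\<forall>x\<in>X. \<forall>y\<in>X. \<not> (f x < f y \<and> g y < g x))"

definition epow :: "ennreal \<Rightarrow> real \<Rightarrow> ennreal" where
  "epow x p = (if x = \<infinity> then \<infinity> else ennreal (enn2real x powr p))"

text \<open>Extension of H : [0,\<infinity>)^n \<rightarrow> [0,\<infinity>) to [0,\<infinity>]^n (needed to form H(f_1,...,f_n)
  when some f_i takes the value \<infinity>): the supremum of H over the truncations at level k.
  For a continuous non-decreasing H this agrees with H on finite arguments.\<close>
definition Hext :: "(real^'n \<Rightarrow> real) \<Rightarrow> ennreal^'n \<Rightarrow> ennreal" where
  "Hext H y = (SUP k::nat. ennreal (H (\<chi> i. enn2real (min (y$i) (of_nat k)))))"

end

theory Submission imports Defs begin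

lemma powr_le_self_imp: assumes "\<And>x::real. 0 \<le> x \<Longrightarrow> x powr a \<le> x" shows "a = 1"
proof -
  have h: "(2::real) powr a \<le> 2 powr 1" using assms[of 2] by simp
  have "a \<le> 1" using powr_le_cancel_iff[of "2::real" a 1] h by linarith
  have h2: "(1/2::real) powr a \<le> (1/2) powr 1" using assms[of "1/2"] by simp
  have "\<not> a < 1" using powr_less_mono'[of "1/2::real" a 1] h2 by auto
  hence "a \<ge> 1" by simp
  show ?thesis using \<open>a \<le> 1\<close> \<open>a \<ge> 1\<close> by simp
qed

lemma powr_ge_self_imp: assumes "\<And>x::real. 0 \<le> x \<Longrightarrow> x \<le> x powr a" shows "a = 1"
proof -
  have h: "(2::real) powr 1 \<le> 2 powr a" using assms[of 2] by simp
  have "a \<ge> 1" using powr_le_cancel_iff[of "2::real" 1 a] h by linarith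
  have h2: "(1/2::real) powr 1 \<le> (1/2) powr a" using assms[of "1/2"] by simp
  have "\<not> 1 < a" using powr_less_mono'[of "1/2::real" 1 a] h2 by auto
  hence "a \<le> 1" by simp
  show ?thesis using \<open>a \<le> 1\<close> \<open>a \<ge> 1\<close> by simp
qed

lemma epow_ge_iff: assumes "a > 0" "p > 0" shows "ennreal (a powr p) \<le> epow y p \<longleftrightarrow> ennreal a \<le> y"
proof (cases "y = \<infinity>")
  case True then show ?thesis by (simp add: epow_def)
next
  case False
  then obtain r where r: "y = ennreal r" "r \<ge> 0" by (cases y) auto
  have "a powr p \<le> r powr p \<longleftrightarrow> a \<le> r"
    using assms r by (meson not_le powr_less_mono2 powr_mono2 less_imp_le)
  then show ?thesis using assms r by (simp add: epow_def)
qed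

lemma meas_vec:
  fixes g :: "'n::finite \<Rightarrow> 'a \<Rightarrow> real"
  assumes "\<And>i. g i \<in> borel_measurable M"
  shows "(\<lambda>x. \<chi> i. g i x) \<in> borel_measurable M"
proof (rule borel_measurable_euclidean_space[THEN iffD2], intro ballI)
  fix b :: "real^'n" assume "b \<in> Basis"
  then obtain i where b: "b = axis i 1" unfolding Basis_vec_def by auto
  have "(\<lambda>x. (\<chi> i. g i x) \<bullet> b) = g i" unfolding b by (simp add: inner_axis)
  then show "(\<lambda>x. (\<chi> i. g i x) \<bullet> b) \<in> borel_measurable M" using assms by simp
qed

lemma epow_meas:
  assumes "g \<in> borel_measurable M"
  shows "(\<lambda>x. epow (g x) p) \<in> borel_measurable M"
  unfolding epow_def using assms by measurable

lemma epow_mono: assumes "x \<le> y" "p > 0" shows "epow x p \<le> epow y p"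
proof (cases "y = \<infinity>")
  case True then show ?thesis by (simp add: epow_def)
next
  case False
  then have "x \<noteq> \<infinity>" using assms top.extremum_unique by auto
  then show ?thesis using False assms
  proof -
    have "enn2real x powr p \<le> enn2real y powr p"
      using assms False by (intro powr_mono2) (auto intro: enn2real_mono simp: top.not_eq_extremum)
    then show ?thesis using False \<open>x \<noteq> \<infinity>\<close> by (simp add: epow_def ennreal_leI)
  qed
qed

lemma epow_ennreal: "0 \<le> r \<Longrightarrow> epow (ennreal r) p = ennreal (r powr p)"
  by (simp add: epow_def)

lemma sugeno_lt:
  assumes "ennreal r < sugeno M m g" "g \<in> borel_measurable M" "monotone_measure M m"
  shows "ennreal r < m {x\<in>space M. ennreal r \<le> g x}"
proof -
  obtain t where t: "t > 0" "ennreal r < min t (m {x\<in>space M. t \<le> g x})"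
    using assms(1) unfolding sugeno_def less_SUP_iff by auto
  have "{x\<in>space M. t \<le> g x} \<subseteq> {x\<in>space M. ennreal r \<le> g x}"
    using t by auto
  moreover have "{x\<in>space M. t \<le> g x} \<in> sets M" "{x\<in>space M. ennreal r \<le> g x} \<in> sets M"
    using assms(2) by measurable
  ultimately have "m {x\<in>space M. t \<le> g x} \<le> m {x\<in>space M. ennreal r \<le> g x}"
    using assms(3) unfolding monotone_measure_def by blast
  then show ?thesis using t by (auto intro: order.strict_trans2)
qed

lemma sugeno_ge:
  assumes "t > 0" "t \<le> m {x\<in>space M. t \<le> g x}"
  shows "t \<le> sugeno M m g"
  unfolding sugeno_def
  by (rule SUP_upper2[of t]) (use assms in auto)

lemma chain_min:
  assumes "finite I" "I \<noteq> {}" "\<forall>i\<in>I. \<forall>j\<in>I. A i \<subseteq> A j \<or> A j \<subseteq> A i"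
  shows "\<exists>k\<in>I. \<forall>i\<in>I. A k \<subseteq> A i"
  using assms
proof (induction I rule: finite_ne_induct)
  case (singleton x) then show ?case by auto
next
  case (insert x F)
  then obtain k where "k \<in> F" "\<forall>i\<in>F. A k \<subseteq> A i" by auto
  show ?case
  proof (cases "A x \<subseteq> A k")
    case True
    then show ?thesis using \<open>\<forall>i\<in>F. A k \<subseteq> A i\<close> by blast
  next
    case False
    then have "A k \<subseteq> A x" using insert.prems \<open>k \<in> F\<close> by blast
    then show ?thesis using \<open>\<forall>i\<in>F. A k \<subseteq> A i\<close> \<open>k \<in> F\<close> by blast
  qed
qed

lemma Hext_meas:
  fixes H :: "real^'n \<Rightarrow> real" and f :: "'n \<Rightarrow> 'a \<Rightarrow> ennreal"
  assumes H_cont: "continuous_on {x. \<forall>i. 0 \<le> x$i} H"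
    and meas: "\<And>i. f i \<in> borel_measurable M"
  shows "(\<lambda>x. Hext H (\<chi> i. f i x)) \<in> borel_measurable M"
proof -
  define H' where "H' y = H (\<chi> i. max 0 (y$i))" for y :: "real^'n"
  have cH': "continuous_on UNIV H'"
  proof -
    have c1: "continuous_on UNIV (\<lambda>y::real^'n. \<chi> i. max 0 (y$i))"
      by (rule continuous_on_vec_lambda, rule continuous_on_max, rule continuous_on_const,
          rule continuous_on_component, rule continuous_on_id)
    show ?thesis unfolding H'_def
      by (rule continuous_on_compose2[OF H_cont c1]) auto
  qed
  define G where "G k x = ennreal (H' (\<chi> i. enn2real (min (f i x) (of_nat k))))" for k :: nat and x
  have eq: "Hext H (\<chi> i. f i x) = (SUP k. G k x)" for x
  proof -
    have v: "(\<chi> i. max 0 ((\<chi> i. enn2real (min (f i x) (of_nat k))) $ i)) = (\<chi> i. enn2real (min ((\<chi> i. f i x) $ i) (of_nat k)))" for k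
      unfolding vec_lambda_beta by (simp only: max_absorb2 enn2real_nonneg)
    show ?thesis unfolding Hext_def G_def H'_def v by (rule refl)
  qed
  have "(\<lambda>x. \<chi> i. enn2real (min (f i x) (of_nat k))) \<in> borel_measurable M" for k
    by (rule meas_vec, rule borel_measurable_enn2real, rule borel_measurable_min,
        rule borel_measurable_const, rule meas)
  then have "(\<lambda>x. H' (\<chi> i. enn2real (min (f i x) (of_nat k)))) \<in> borel_measurable M" for k
    by (rule borel_measurable_continuous_on[OF cH'])
  then have G: "(\<lambda>x. G k x) \<in> borel_measurable M" for k
    unfolding G_def by (rule measurable_compose[OF _ measurable_ennreal])
  have "(\<lambda>x. SUP k\<in>UNIV. G k x) \<in> borel_measurable M"
    by (rule borel_measurable_SUP[of UNIV G M]) (simp_all add: G)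
  then show ?thesis unfolding eq .
qed
lemma small_mult: assumes "0 < (d::real)" "0 < q" "q < 1" shows "0 < d * q" "d * q < d"
proof -
  show "0 < d * q" using assms by simp
  have "d * q < d * 1" by (rule mult_strict_left_mono) (use assms in auto)
  then show "d * q < d" by simp
qed

theorem corollary3p7:
  fixes H :: "real^'n \<Rightarrow> real"
    and \<omega> \<xi> :: "'n \<Rightarrow> real" and \<omega>0 \<xi>0 :: real
    and M :: "'a measure" and m :: "'a set \<Rightarrow> ennreal"
    and f :: "'n \<Rightarrow> 'a \<Rightarrow> ennreal"
  assumes H_cont: "continuous_on {x. \<forall>i. 0 \<le> x$i} H"
    and H_nonneg: "\<And>x. (\<forall>i. 0 \<le> x$i) \<Longrightarrow> 0 \<le> H x"
    and H_mono: "\<And>x y. (\<forall>i. 0 \<le> x$i) \<Longrightarrow> (\<forall>i. x$i \<le> y$i) \<Longrightarrow> H x \<le> H y"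
    and H_min: "\<And>x i. (\<forall>j. 0 \<le> x$j) \<Longrightarrow> H x \<le> x$i"
    and pos: "\<omega>0 > 0" "\<xi>0 > 0" "\<And>i. \<omega> i > 0" "\<And>i. \<xi> i > 0"
    and pw0: "\<And>x::real. 0 \<le> x \<Longrightarrow> x powr (1 / (\<xi>0 * \<omega>0)) \<le> x"
    and pwi: "\<And>(x::real) i. 0 \<le> x \<Longrightarrow> x \<le> x powr (1 / (\<xi> i * \<omega> i))"
    and pwr: "\<And>(x::real) i. 0 \<le> x \<Longrightarrow> x powr (\<omega> i / \<omega>0) \<le> x"
    and meas: "\<And>i. f i \<in> borel_measurable M"
    and comon: "\<And>i j. comonotone (space M) (f i) (f j)"
    and mm: "monotone_measure M m"
    and fin: "\<And>i. sugeno M m (\<lambda>x. epow (f i x) (\<xi> i)) < \<infinity>"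
  shows "epow (sugeno M m (\<lambda>x. epow (Hext H (\<chi> i. f i x)) \<xi>0)) \<omega>0
         \<ge> ennreal (H (\<chi> i. enn2real (epow (sugeno M m (\<lambda>x. epow (f i x) (\<xi> i))) (\<omega> i))))"
proof -
  have "1 / (\<xi>0 * \<omega>0) = 1" by (rule powr_le_self_imp) (rule pw0)
  then have e0: "\<xi>0 * \<omega>0 = 1" by (simp add: divide_eq_1_iff)
  have wi: "\<omega> i = \<omega>0" for i
  proof -
    have "\<omega> i / \<omega>0 = 1" by (rule powr_le_self_imp) (rule pwr)
    then show ?thesis using pos(1) by (simp add: divide_eq_1_iff)
  qed
  have xi: "\<xi> i = \<xi>0" for i
  proof -
    have "1 / (\<xi> i * \<omega> i) = 1" by (rule powr_ge_self_imp) (rule pwi)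
    then have "\<xi> i * \<omega>0 = \<xi>0 * \<omega>0" using e0 wi[of i] by (simp add: divide_eq_1_iff)
    then show ?thesis using pos(1) by simp
  qed
  define S where "S i = sugeno M m (\<lambda>x. epow (f i x) \<xi>0)" for i
  define Su where "Su = sugeno M m (\<lambda>x. epow (Hext H (\<chi> i. f i x)) \<xi>0)"
  define a where "a i = enn2real (S i)" for i
  define b where "b i = enn2real (epow (S i) \<omega>0)" for i
  have Sfin: "S i < \<infinity>" for i using fin[of i] unfolding S_def xi .
  have Sa: "S i = ennreal (a i)" for i using Sfin[of i] unfolding a_def by simp
  have ann: "0 \<le> a i" for i unfolding a_def by simp
  have b_eq: "b i = a i powr \<omega>0" for i
    unfolding b_def using Sfin[of i] Sa[of i] ann[of i] by (simp add: epow_def)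
  have bnn: "0 \<le> b i" for i unfolding b_eq by simp
  define c where "c = H (\<chi> i. b i)"
  have goal: "ennreal c \<le> epow Su \<omega>0"
  proof (cases "c \<le> 0")
    case True then have "ennreal c = 0" by (simp add: ennreal_neg)
    then show ?thesis by simp
  next
    case False
    then have cpos: "0 < c" by simp
    have key: "ennreal t \<le> epow Su \<omega>0" if t: "0 < t" "t < c" for t
    proof -
      have bt: "t < b i" for i
        using H_min[of "\<chi> i. b i" i] bnn t unfolding c_def by auto
      define s where "s k = (\<chi> i. b i - (b i - t) * (inverse (real (Suc k)) / 2))" for k :: nat
      have sb: "t < s k $ i \<and> s k $ i < b i" for k i
      proof -
        have "inverse (real (Suc k)) \<le> 1" by (simp add: inverse_le_1_iff)
        then have q: "0 < inverse (real (Suc k)) / 2" "inverse (real (Suc k)) / 2 < 1" by auto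
        have "0 < b i - t" using bt[of i] by simp
        from small_mult[OF this q] show ?thesis unfolding s_def by simp
      qed
      have lim: "s \<longlonglongrightarrow> (\<chi> i. b i)"
        unfolding s_def
      proof (rule tendsto_vec_lambda)
        fix i
        have "(\<lambda>k. b i - (b i - t) * (inverse (real (Suc k)) / 2)) \<longlonglongrightarrow> b i - (b i - t) * (0 / 2)"
          by (intro tendsto_intros LIMSEQ_inverse_real_of_nat) simp
        then show "(\<lambda>k. b i - (b i - t) * (inverse (real (Suc k)) / 2)) \<longlonglongrightarrow> b i" by simp
      qed
      have snn: "\<forall>i. 0 \<le> s k $ i" for k using sb[of k] t by (auto intro: less_imp_le order.strict_trans)
      have "(\<lambda>k. H (s k)) \<longlonglongrightarrow> H (\<chi> i. b i)"
        by (rule continuous_on_tendsto_compose[OF H_cont lim]) (use bnn snn in auto)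
      then have "eventually (\<lambda>k. t < H (s k)) sequentially"
        using t unfolding c_def by (intro order_tendstoD(1)) auto
      then obtain k where Hs: "t < H (s k)" by (auto simp: eventually_sequentially)
      define \<sigma> where "\<sigma> = s k"
      have \<sigma>b: "t < \<sigma> $ i" "\<sigma> $ i < b i" for i using sb[of k i] unfolding \<sigma>_def by auto
      have \<sigma>pos: "0 < \<sigma> $ i" for i using \<sigma>b(1)[of i] t by simp
      have sl: "ennreal (\<sigma> $ i powr \<xi>0) < S i" for i
      proof -
        have "\<sigma> $ i powr \<xi>0 < (a i powr \<omega>0) powr \<xi>0"
          using \<sigma>b(2)[of i] \<sigma>pos[of i] pos(2) unfolding b_eq by (intro powr_less_mono2) auto
        also have "\<dots> = a i" using ann[of i] e0 by (simp add: powr_powr mult.commute)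
        finally show ?thesis unfolding Sa using ann[of i] by (subst ennreal_less_iff) auto
      qed
      define A where "A i = {x\<in>space M. ennreal (\<sigma> $ i) \<le> f i x}" for i
      have Ameas: "A i \<in> sets M" for i unfolding A_def using meas[of i] by measurable
      have Am: "ennreal (\<sigma> $ i powr \<xi>0) < m (A i)" for i
      proof -
        have "ennreal (\<sigma> $ i powr \<xi>0) < m {x\<in>space M. ennreal (\<sigma> $ i powr \<xi>0) \<le> epow (f i x) \<xi>0}"
          by (rule sugeno_lt[OF sl[of i, unfolded S_def] epow_meas[OF meas] mm])
        also have "{x\<in>space M. ennreal (\<sigma> $ i powr \<xi>0) \<le> epow (f i x) \<xi>0} = A i"
          unfolding A_def using epow_ge_iff[OF \<sigma>pos[of i] pos(2)] by simp
        finally show ?thesis .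
      qed
      have chain: "A i \<subseteq> A j \<or> A j \<subseteq> A i" for i j
      proof (rule ccontr)
        assume "\<not> (A i \<subseteq> A j \<or> A j \<subseteq> A i)"
        then obtain x y where x: "x \<in> A i" "x \<notin> A j" and y: "y \<in> A j" "y \<notin> A i" by blast
        have xs: "x \<in> space M" "y \<in> space M" using x y unfolding A_def by auto
        have 1: "f i y < f i x"
          using x y xs unfolding A_def by (auto simp: not_le intro: order.strict_trans2)
        have 2: "f j x < f j y"
          using x y xs unfolding A_def by (auto simp: not_le intro: order.strict_trans2)
        show False using comon[of i j] xs 1 2 unfolding comonotone_def by blast
      qed
      obtain k0 where k0: "\<forall>i. A k0 \<subseteq> A i"
        using chain_min[of "UNIV :: 'n set" A] chain by auto
      define B where "B = {x\<in>space M. ennreal (t powr \<xi>0) \<le> epow (Hext H (\<chi> i. f i x)) \<xi>0}"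
      have gm: "(\<lambda>x. epow (Hext H (\<chi> i. f i x)) \<xi>0) \<in> borel_measurable M"
        by (rule epow_meas[OF Hext_meas[OF H_cont meas]])
      have Bmeas: "B \<in> sets M" unfolding B_def using gm by measurable
      have sub: "A k0 \<subseteq> B"
      proof
        fix x assume "x \<in> A k0"
        then have xA: "x \<in> space M" "ennreal (\<sigma> $ i) \<le> f i x" for i
          using k0 unfolding A_def by blast+
        define K where "K = nat \<lceil>\<Sum>i\<in>UNIV. \<sigma> $ i\<rceil>"
        have \<sigma>K: "\<sigma> $ i \<le> real K" for i
        proof -
          have "\<sigma> $ i \<le> (\<Sum>i\<in>UNIV. \<sigma> $ i)"
            by (rule member_le_sum) (auto intro: less_imp_le \<sigma>pos)
          also have "\<dots> \<le> real K" unfolding K_def by linarith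
          finally show ?thesis .
        qed
        have le: "\<sigma> $ i \<le> enn2real (min (f i x) (of_nat K))" for i
        proof -
          have "ennreal (\<sigma> $ i) \<le> min (f i x) (of_nat K)"
            using xA(2)[of i] \<sigma>K[of i] by (simp add: ennreal_of_nat_eq_real_of_nat ennreal_leI)
          moreover have "min (f i x) (of_nat K) < \<infinity>"
            by (simp add: min.strict_coboundedI2 ennreal_of_nat_eq_real_of_nat)
          ultimately have "enn2real (ennreal (\<sigma> $ i)) \<le> enn2real (min (f i x) (of_nat K))"
            by (intro enn2real_mono) auto
          then show ?thesis using \<sigma>pos[of i] by simp
        qed
        have "H \<sigma> \<le> H (\<chi> i. enn2real (min ((\<chi> i. f i x) $ i) (of_nat K)))"
          by (rule H_mono) (use \<sigma>pos le in \<open>auto intro: less_imp_le\<close>)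
        then have "ennreal t \<le> ennreal (H (\<chi> i. enn2real (min ((\<chi> i. f i x) $ i) (of_nat K))))"
          using Hs unfolding \<sigma>_def by (intro ennreal_leI) simp
        also have "\<dots> \<le> Hext H (\<chi> i. f i x)"
          unfolding Hext_def by (rule SUP_upper) simp
        finally have "ennreal t \<le> Hext H (\<chi> i. f i x)" .
        then show "x \<in> B" unfolding B_def using xA(1) epow_ge_iff[OF t(1) pos(2)] by simp
      qed
      have "m (A k0) \<le> m B" using mm Ameas[of k0] Bmeas sub unfolding monotone_measure_def by blast
      moreover have "ennreal (t powr \<xi>0) < ennreal (\<sigma> $ k0 powr \<xi>0)"
        using \<sigma>b(1)[of k0] t pos(2) by (intro ennreal_lessI powr_less_mono2) auto
      ultimately have "ennreal (t powr \<xi>0) \<le> m B" using Am[of k0] by (meson less_imp_le order.strict_trans order.strict_trans2)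
      then have "ennreal (t powr \<xi>0) \<le> Su"
        unfolding Su_def B_def by (intro sugeno_ge) (use t in auto)
      then have "epow (ennreal (t powr \<xi>0)) \<omega>0 \<le> epow Su \<omega>0" by (rule epow_mono) (rule pos(1))
      moreover have "epow (ennreal (t powr \<xi>0)) \<omega>0 = ennreal t"
        using t e0 by (simp add: epow_ennreal powr_powr)
      ultimately show ?thesis by simp
    qed
    show ?thesis
    proof (rule dense_le_bounded[of 0])
      show "0 < ennreal c" using cpos by simp
    next
      fix w assume w: "0 < w" "w < ennreal c"
      then have "w \<noteq> top" using top.not_eq_extremum by fastforce
      then obtain t where tw: "w = ennreal t" "0 \<le> t" by (cases w) auto
      have "0 < t" "t < c" using w tw cpos by (auto simp: ennreal_less_iff)
      then show "w \<le> epow Su \<omega>0" using key tw by simp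
    qed
  qed
  show ?thesis using goal unfolding c_def b_def S_def Su_def by (simp add: xi wi)
qed

end
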